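(* Let $A$ be a finite left brace of odd order with cyclic additive group and Z-group multiplicative group, written as $A=\bar{A}\times\bar{B}$ as described in the context. Then $\mathrm{Soc}(A)=\mathrm{Soc}(\bar{A})\times(B_{m+1}\times\dots\times B_r\times I_1\times\dots\times I_m)$. In particular, the quotient left brace $A/\mathrm{Soc}(A)$ has cyclic multiplicative group.
   Context: A left brace is a set $A$ with $(A,+)$ abelian group, $(A,\circ)$ group, $a\circ(b+c)=a\circ b-a+a\circ c$; $\lambda_a(b):=-a+a\circ b$, and $\mathrm{Soc}(A)=\{a\mid\lambda_a=\mathrm{id}\}$, an ideal. A trivial left brace has $a\circ b=a+b$. A Z-group is a finite group with all Sylow subgroups cyclic. Decomposition: there are integers $v,m,r\ge 0$ with $m\le r$, pairwise distinct odd primes $q_1,\dots,q_v,p_1,\dots,p_r$ with $p_1<\dots<p_r$, positive integers $\gamma_i,\beta_j$, left braces $A_1,\dots,A_v$ and $B_1,\dots,B_r$ with cyclic additive groups, $|A_i|=q_i^{\gamma_i}$, $|B_j|=p_j^{\beta_j}$, $B_{m+1},\dots,B_r$ trivial, and a homomorphism $\alpha:(B_1\times\dots\times B_m,\circ)\to\mathrm{Aut}(B_{m+1}\times\dots\times B_r,+)$ whose restriction to each $B_i$ ($i\le m$) is nontrivial and whose image acts nontrivially on each $B_i$ ($i>m$), such that $A=\bar A\times\bar B$ (direct product of left braces), where $\bar A=A_1\times\dots\times A_v$ is a direct product of left braces and $\bar B=(B_{m+1}\times\dots\times B_r)\rtimes_\alpha(B_1\times\dots\times B_m)$ is the semidirect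 product of left braces: additive group the direct product, and $(x,y)\circ(x',y')=(x\circ\alpha(y)(x'),y\circ y')$. For $j\le m$, $I_j:=\mathrm{Soc}(B_j)\cap\ker\alpha$. *)

theory Defs
  imports "HOL-Algebra.Algebra" "HOL-Computational_Algebra.Primes" "HOL-Library.FuncSet"
begin

text \<open>A left brace is given by a carrier, the addition, the multiplication circ,
  and the common neutral element (in any left brace the neutral elements of
  the additive and multiplicative groups coincide).\<close>

record 'a brace =
  carrier_b :: "'a set"
  plus_b :: "'a \<Rightarrow> 'a \<Rightarrow> 'a"
  circ_b :: "'a \<Rightarrow> 'a \<Rightarrow> 'a"
  zero_b :: "'a"

definition add_group :: "'a brace \<Rightarrow> 'a monoid" where
  "add_group B = \<lparr>carrier = carrier_b B, monoid.mult = plus_b B, one = zero_b B\<rparr>"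

definition mult_group :: "'a brace \<Rightarrow> 'a monoid" where
  "mult_group B = \<lparr>carrier = carrier_b B, monoid.mult = circ_b B, one = zero_b B\<rparr>"

definition neg_b :: "'a brace \<Rightarrow> 'a \<Rightarrow> 'a" where
  "neg_b B a = inv\<^bsub>add_group B\<^esub> a"

definition left_brace :: "'a brace \<Rightarrow> bool" where
  "left_brace B \<longleftrightarrow> comm_group (add_group B) \<and> group (mult_group B) \<and>
     (\<forall>a\<in>carrier_b B. \<forall>b\<in>carrier_b B. \<forall>c\<in>carrier_b B.
        circ_b B a (plus_b B b c) = plus_b B (plus_b B (circ_b B a b) (neg_b B a)) (circ_b B a c))"

definition lambda_b :: "'a brace \<Rightarrow> 'a \<Rightarrow> 'a \<Rightarrow> 'a" where
  "lambda_b B a b = plus_b B (neg_b B a) (circ_b B a b)"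

definition soc :: "'a brace \<Rightarrow> 'a set" where
  "soc B = {a \<in> carrier_b B. \<forall>b\<in>carrier_b B. lambda_b B a b = b}"

definition trivial_brace :: "'a brace \<Rightarrow> bool" where
  "trivial_brace B \<longleftrightarrow> (\<forall>a\<in>carrier_b B. \<forall>b\<in>carrier_b B. circ_b B a b = plus_b B a b)"

definition sylow_subgroup :: "('a, 'b) monoid_scheme \<Rightarrow> nat \<Rightarrow> 'a set \<Rightarrow> bool" where
  "sylow_subgroup G p P \<longleftrightarrow> Factorial_Ring.prime p \<and> subgroup P G \<and> card P = p ^ multiplicity p (order G)"

definition z_group :: "('a, 'b) monoid_scheme \<Rightarrow> bool" where
  "z_group G \<longleftrightarrow> group G \<and> finite (carrier G) \<and>
     (\<forall>p P. sylow_subgroup G p P \<longrightarrow> cyclic_group (subgroup_generated G P))"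

definition prod_brace :: "nat set \<Rightarrow> (nat \<Rightarrow> 'a brace) \<Rightarrow> (nat \<Rightarrow> 'a) brace" where
  "prod_brace I Bs = \<lparr>carrier_b = (\<Pi>\<^sub>E i\<in>I. carrier_b (Bs i)),
     plus_b = (\<lambda>f g. \<lambda>i\<in>I. plus_b (Bs i) (f i) (g i)),
     circ_b = (\<lambda>f g. \<lambda>i\<in>I. circ_b (Bs i) (f i) (g i)),
     zero_b = (\<lambda>i\<in>I. zero_b (Bs i))\<rparr>"

definition emb :: "nat set \<Rightarrow> (nat \<Rightarrow> 'a brace) \<Rightarrow> nat \<Rightarrow> 'a \<Rightarrow> (nat \<Rightarrow> 'a)" where
  "emb I Bs j b = (\<lambda>i\<in>I. if i = j then b else zero_b (Bs i))"

definition pair_brace :: "'a brace \<Rightarrow> 'b brace \<Rightarrow> ('a \<times> 'b) brace" where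
  "pair_brace A B = \<lparr>carrier_b = carrier_b A \<times> carrier_b B,
     plus_b = (\<lambda>(x,y) (x',y'). (plus_b A x x', plus_b B y y')),
     circ_b = (\<lambda>(x,y) (x',y'). (circ_b A x x', circ_b B y y')),
     zero_b = (zero_b A, zero_b B)\<rparr>"

definition semidirect_brace :: "'a brace \<Rightarrow> 'b brace \<Rightarrow> ('b \<Rightarrow> 'a \<Rightarrow> 'a) \<Rightarrow> ('a \<times> 'b) brace" where
  "semidirect_brace N H \<alpha> = \<lparr>carrier_b = carrier_b N \<times> carrier_b H,
     plus_b = (\<lambda>(x,y) (x',y'). (plus_b N x x', plus_b H y y')),
     circ_b = (\<lambda>(x,y) (x',y'). (circ_b N x (\<alpha> y x'), circ_b H y y')),
     zero_b = (zero_b N, zero_b H)\<rparr>"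

definition action_hom :: "'b brace \<Rightarrow> 'a brace \<Rightarrow> ('b \<Rightarrow> 'a \<Rightarrow> 'a) \<Rightarrow> bool" where
  "action_hom H N \<alpha> \<longleftrightarrow>
     (\<forall>y\<in>carrier_b H. \<alpha> y \<in> Group.iso (add_group N) (add_group N)) \<and>
     (\<forall>y\<in>carrier_b H. \<forall>y'\<in>carrier_b H. \<forall>x\<in>carrier_b N.
        \<alpha> (circ_b H y y') x = \<alpha> y (\<alpha> y' x))"

definition ker_action :: "'b brace \<Rightarrow> 'a brace \<Rightarrow> ('b \<Rightarrow> 'a \<Rightarrow> 'a) \<Rightarrow> 'b set" where
  "ker_action H N \<alpha> = {y \<in> carrier_b H. \<forall>x\<in>carrier_b N. \<alpha> y x = x}"

end

theory Submission
  imports Defs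
begin


lemma add_group_simps[simp]:
  "carrier (add_group B) = carrier_b B" "monoid.mult (add_group B) = plus_b B" "one (add_group B) = zero_b B"
  by (simp_all add: add_group_def)

lemma mult_group_simps[simp]:
  "carrier (mult_group B) = carrier_b B" "monoid.mult (mult_group B) = circ_b B" "one (mult_group B) = zero_b B"
  by (simp_all add: mult_group_def)

lemma lb_add: "left_brace B \<Longrightarrow> comm_group (add_group B)"
  by (simp add: left_brace_def)
lemma lb_mult: "left_brace B \<Longrightarrow> group (mult_group B)"
  by (simp add: left_brace_def)
lemma lb_dist: "left_brace B \<Longrightarrow> a \<in> carrier_b B \<Longrightarrow> b \<in> carrier_b B \<Longrightarrow> c \<in> carrier_b B \<Longrightarrow>
        circ_b B a (plus_b B b c) = plus_b B (plus_b B (circ_b B a b) (neg_b B a)) (circ_b B a c)"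
  by (simp add: left_brace_def)

lemma add_group_prod: "add_group (prod_brace I Bs) = product_group I (\<lambda>i. add_group (Bs i))"
  by (simp add: add_group_def product_group_def prod_brace_def)
lemma mult_group_prod: "mult_group (prod_brace I Bs) = product_group I (\<lambda>i. mult_group (Bs i))"
  by (simp add: mult_group_def product_group_def prod_brace_def)
lemma add_group_pair: "add_group (pair_brace A B) = add_group A \<times>\<times> add_group B"
  by (simp add: add_group_def DirProd_def pair_brace_def)
lemma mult_group_pair: "mult_group (pair_brace A B) = mult_group A \<times>\<times> mult_group B"
  by (simp add: mult_group_def DirProd_def pair_brace_def)
lemma add_group_semi: "add_group (semidirect_brace N H \<alpha>) = add_group N \<times>\<times> add_group H"
  by (simp add: add_group_def DirProd_def semidirect_brace_def)

lemma prod_brace_simps[simp]: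
  "carrier_b (prod_brace I Bs) = (\<Pi>\<^sub>E i\<in>I. carrier_b (Bs i))"
  "plus_b (prod_brace I Bs) f g = (\<lambda>i\<in>I. plus_b (Bs i) (f i) (g i))"
  "circ_b (prod_brace I Bs) f g = (\<lambda>i\<in>I. circ_b (Bs i) (f i) (g i))"
  "zero_b (prod_brace I Bs) = (\<lambda>i\<in>I. zero_b (Bs i))"
  by (simp_all add: prod_brace_def)

lemma pair_brace_simps[simp]:
  "carrier_b (pair_brace A B) = carrier_b A \<times> carrier_b B"
  "plus_b (pair_brace A B) (x,y) (x',y') = (plus_b A x x', plus_b B y y')"
  "circ_b (pair_brace A B) (x,y) (x',y') = (circ_b A x x', circ_b B y y')"
  "zero_b (pair_brace A B) = (zero_b A, zero_b B)"
  by (simp_all add: pair_brace_def)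

lemma semi_brace_simps[simp]:
  "carrier_b (semidirect_brace N H \<alpha>) = carrier_b N \<times> carrier_b H"
  "plus_b (semidirect_brace N H \<alpha>) (x,y) (x',y') = (plus_b N x x', plus_b H y y')"
  "circ_b (semidirect_brace N H \<alpha>) (x,y) (x',y') = (circ_b N x (\<alpha> y x'), circ_b H y y')"
  "zero_b (semidirect_brace N H \<alpha>) = (zero_b N, zero_b H)"
  by (simp_all add: semidirect_brace_def)

lemma neg_prod:
  assumes "\<And>i. i \<in> I \<Longrightarrow> group (add_group (Bs i))" "f \<in> carrier_b (prod_brace I Bs)"
  shows "neg_b (prod_brace I Bs) f = (\<lambda>i\<in>I. neg_b (Bs i) (f i))"
  unfolding neg_b_def add_group_prod using assms by (subst inv_product_group) (auto simp: add_group_prod)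

lemma neg_pair:
  assumes "group (add_group A)" "group (add_group B)" "x \<in> carrier_b A" "y \<in> carrier_b B"
  shows "neg_b (pair_brace A B) (x,y) = (neg_b A x, neg_b B y)"
  unfolding neg_b_def add_group_pair using assms by (subst inv_DirProd) auto

lemma neg_semi:
  assumes "group (add_group A)" "group (add_group B)" "x \<in> carrier_b A" "y \<in> carrier_b B"
  shows "neg_b (semidirect_brace A B \<alpha>) (x,y) = (neg_b A x, neg_b B y)"
  unfolding neg_b_def add_group_semi using assms by (subst inv_DirProd) auto



lemma lambda_facts:
  assumes B: "left_brace B" and a: "a \<in> carrier_b B" and b: "b \<in> carrier_b B" and c: "c \<in> carrier_b B"
  shows "lambda_b B a c \<in> carrier_b B"
    and "lambda_b B (circ_b B a b) c = lambda_b B a (lambda_b B b c)"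
    and "lambda_b B (zero_b B) c = c"
proof -
  interpret P: comm_group "add_group B" using lb_add[OF B] .
  interpret M: group "mult_group B" using lb_mult[OF B] .
  have cl: "plus_b B x y \<in> carrier_b B" if "x \<in> carrier_b B" "y \<in> carrier_b B" for x y
    using P.m_closed[of x y] that by simp
  have ccl: "circ_b B x y \<in> carrier_b B" if "x \<in> carrier_b B" "y \<in> carrier_b B" for x y
    using M.m_closed[of x y] that by simp
  have ncl: "neg_b B x \<in> carrier_b B" if "x \<in> carrier_b B" for x
    using P.inv_closed[of x] that by (simp add: neg_b_def)
  show "lambda_b B a c \<in> carrier_b B" unfolding lambda_b_def using a c ncl cl ccl by simp
  show "lambda_b B (zero_b B) c = c" unfolding lambda_b_def neg_b_def
    using M.l_one[of c] P.inv_one P.l_one[of c] c by simp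
  have as: "plus_b B (plus_b B x y) z = plus_b B x (plus_b B y z)"
    if "x \<in> carrier_b B" "y \<in> carrier_b B" "z \<in> carrier_b B" for x y z
    using P.m_assoc[of x y z] that by simp
  have cm: "plus_b B x y = plus_b B y x" if "x \<in> carrier_b B" "y \<in> carrier_b B" for x y
    using P.m_comm[of x y] that by simp
  have lc: "plus_b B x (plus_b B y z) = plus_b B y (plus_b B x z)"
    if "x \<in> carrier_b B" "y \<in> carrier_b B" "z \<in> carrier_b B" for x y z
    using P.m_lcomm[of x y z] that by simp
  have c1: "plus_b B x (plus_b B (neg_b B x) y) = y" if "x \<in> carrier_b B" "y \<in> carrier_b B" for x y
    using P.r_inv[of x] P.l_one[of y] that P.m_assoc[of x "neg_b B x" y] ncl[of x] by (simp add: neg_b_def)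
  have c2: "plus_b B (neg_b B x) (plus_b B x y) = y" if "x \<in> carrier_b B" "y \<in> carrier_b B" for x y
    using P.l_inv[of x] P.l_one[of y] that P.m_assoc[of "neg_b B x" x y] ncl[of x] by (simp add: neg_b_def)
  have c3: "plus_b B x (neg_b B x) = zero_b B" if "x \<in> carrier_b B" for x
    using P.r_inv[of x] that by (simp add: neg_b_def)
  have z1: "plus_b B x (zero_b B) = x" "plus_b B (zero_b B) x = x" if "x \<in> carrier_b B" for x
    using P.r_one[of x] P.l_one[of x] that by simp_all
  have c4: "plus_b B x (plus_b B y (neg_b B x)) = y" if "x \<in> carrier_b B" "y \<in> carrier_b B" for x y
    using c3[of x] z1[of y] lc[of x y "neg_b B x"] ncl[of x] that by simp
  note AC = as cm lc c1 c2 c3 c4 z1 cl ncl ccl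
  have d: "circ_b B x (plus_b B y z) = plus_b B (plus_b B (circ_b B x y) (neg_b B x)) (circ_b B x z)"
    if "x \<in> carrier_b B" "y \<in> carrier_b B" "z \<in> carrier_b B" for x y z using lb_dist[OF B that] .
  have ab: "circ_b B a b \<in> carrier_b B" using ccl a b by simp
  have nb: "neg_b B b \<in> carrier_b B" using ncl b .
  have bc: "circ_b B b c \<in> carrier_b B" using ccl b c by simp
  have "a = circ_b B a (plus_b B b (neg_b B b))"
    using M.r_one[of a] a b P.r_inv[of b] by (simp add: neg_b_def)
  also have "\<dots> = plus_b B (plus_b B (circ_b B a b) (neg_b B a)) (circ_b B a (neg_b B b))"
    using d a b nb by simp
  finally have e1: "a = plus_b B (plus_b B (circ_b B a b) (neg_b B a)) (circ_b B a (neg_b B b))" .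
  have anb: "circ_b B a (neg_b B b) \<in> carrier_b B" using ccl a nb by simp
  have na: "neg_b B a \<in> carrier_b B" using ncl a .
  have nab: "neg_b B (circ_b B a b) \<in> carrier_b B" using ncl ab .
  have e2: "circ_b B a (neg_b B b) = plus_b B (plus_b B a (neg_b B (circ_b B a b))) a"
  proof -
    let ?x = "circ_b B a (neg_b B b)" and ?u = "circ_b B a b"
    have "plus_b B (plus_b B a (neg_b B ?u)) a = plus_b B (plus_b B (plus_b B (plus_b B ?u (neg_b B a)) ?x) (neg_b B ?u)) a"
      using e1 by simp
    also have "\<dots> = ?x"
      using anb ab na nab a by (simp add: AC)
    finally show ?thesis by simp
  qed
  have "lambda_b B a (lambda_b B b c) = plus_b B (neg_b B a) (circ_b B a (plus_b B (neg_b B b) (circ_b B b c)))"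
    by (simp add: lambda_b_def)
  also have "\<dots> = plus_b B (neg_b B a) (plus_b B (plus_b B (circ_b B a (neg_b B b)) (neg_b B a)) (circ_b B a (circ_b B b c)))"
    using d a nb bc by simp
  also have "\<dots> = plus_b B (neg_b B (circ_b B a b)) (circ_b B (circ_b B a b) c)"
    unfolding e2 using M.m_assoc[of a b c] a b c ab na nab ccl[OF a bc] by (simp add: AC)
  finally show "lambda_b B (circ_b B a b) c = lambda_b B a (lambda_b B b c)"
    by (simp add: lambda_b_def)
qed

lemma soc_normal:
  assumes B: "left_brace B"
  shows "soc B \<lhd> mult_group B"
proof -
  interpret M: group "mult_group B" using lb_mult[OF B] .
  note L = lambda_facts[OF B]
  have L3: "lambda_b B (zero_b B) c = c" if "c \<in> carrier_b B" for c
    using L(3)[OF _ _ that] M.one_closed by simp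
  have sub: "subgroup (soc B) (mult_group B)"
  proof
    show "soc B \<subseteq> carrier (mult_group B)" by (auto simp: soc_def)
    show "x \<otimes>\<^bsub>mult_group B\<^esub> y \<in> soc B" if "x \<in> soc B" "y \<in> soc B" for x y
      using that M.m_closed[of x y] by (auto simp: soc_def L L3)
    show "\<one>\<^bsub>mult_group B\<^esub> \<in> soc B" using M.one_closed by (auto simp: soc_def L L3)
    show "inv\<^bsub>mult_group B\<^esub> x \<in> soc B" if "x \<in> soc B" for x
    proof -
      have x: "x \<in> carrier_b B" using that by (simp add: soc_def)
      have ix: "inv\<^bsub>mult_group B\<^esub> x \<in> carrier_b B" using M.inv_closed[of x] x by simp
      have "lambda_b B (inv\<^bsub>mult_group B\<^esub> x) c = c" if c: "c \<in> carrier_b B" for c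
      proof -
        have "lambda_b B (inv\<^bsub>mult_group B\<^esub> x) c = lambda_b B (inv\<^bsub>mult_group B\<^esub> x) (lambda_b B x c)"
          using \<open>x \<in> soc B\<close> c by (simp add: soc_def)
        also have "\<dots> = lambda_b B (circ_b B (inv\<^bsub>mult_group B\<^esub> x) x) c" using L(2)[OF ix x c] by simp
        also have "\<dots> = c" using M.l_inv[of x] x L3[OF c] by simp
        finally show ?thesis .
      qed
      then show ?thesis using ix by (simp add: soc_def)
    qed
  qed
  show ?thesis
  proof (subst M.normal_inv_iff, intro conjI sub ballI)
    fix g h assume g: "g \<in> carrier (mult_group B)" and h: "h \<in> soc B"
    have gc: "g \<in> carrier_b B" using g by simp
    have hc: "h \<in> carrier_b B" using h by (simp add: soc_def)
    have ig: "inv\<^bsub>mult_group B\<^esub> g \<in> carrier_b B" using M.inv_closed[of g] g by simp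
    have "lambda_b B (circ_b B (circ_b B g h) (inv\<^bsub>mult_group B\<^esub> g)) c = c" if c: "c \<in> carrier_b B" for c
    proof -
      have gh: "circ_b B g h \<in> carrier_b B" using M.m_closed[of g h] gc hc by simp
      have "lambda_b B (circ_b B (circ_b B g h) (inv\<^bsub>mult_group B\<^esub> g)) c
          = lambda_b B g (lambda_b B h (lambda_b B (inv\<^bsub>mult_group B\<^esub> g) c))"
        using L(2)[OF gh ig c] L(2)[OF gc hc L(1)[OF ig gc c]] by simp
      also have "\<dots> = lambda_b B g (lambda_b B (inv\<^bsub>mult_group B\<^esub> g) c)"
        using h L(1)[OF ig gc c] by (simp add: soc_def)
      also have "\<dots> = c" using L(2)[OF gc ig c] M.r_inv[of g] gc L3[OF c] by simp
      finally show ?thesis .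
    qed
    then show "g \<otimes>\<^bsub>mult_group B\<^esub> h \<otimes>\<^bsub>mult_group B\<^esub> inv\<^bsub>mult_group B\<^esub> g \<in> soc B"
      using M.m_closed[of "circ_b B g h" "inv\<^bsub>mult_group B\<^esub> g"] M.m_closed[of g h] gc hc ig
      by (simp add: soc_def)
  qed
qed



lemma quot_cyclic:
  assumes G: "group G" and S: "S \<lhd> G" and g: "g \<in> carrier G"
    and rep: "\<And>x. x \<in> carrier G \<Longrightarrow> \<exists>s\<in>S. \<exists>k::nat. x = s \<otimes>\<^bsub>G\<^esub> g [^]\<^bsub>G\<^esub> k"
  shows "cyclic_group (G Mod S)"
proof -
  have Q: "group (G Mod S)" by (rule normal.factorgroup_is_group[OF S])
  have hom: "(\<lambda>a. S #>\<^bsub>G\<^esub> a) \<in> hom G (G Mod S)" by (rule normal.r_coset_hom_Mod[OF S])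
  have sub: "subgroup S G" by (rule normal_imp_subgroup[OF S])
  have Ssub: "S \<subseteq> carrier G" by (rule subgroup.subset[OF sub])
  have pw: "(S #>\<^bsub>G\<^esub> g) [^]\<^bsub>G Mod S\<^esub> (n::int) = S #>\<^bsub>G\<^esub> (g [^]\<^bsub>G\<^esub> n)" for n
    using hom_int_pow[OF hom g G Q] by simp
  show ?thesis
  proof (subst group.cyclic_group[OF Q], rule bexI[where x="S #>\<^bsub>G\<^esub> g"])
    show "S #>\<^bsub>G\<^esub> g \<in> carrier (G Mod S)" using g by (simp add: carrier_FactGroup)
    show "carrier (G Mod S) = range (\<lambda>n::int. (S #>\<^bsub>G\<^esub> g) [^]\<^bsub>G Mod S\<^esub> n)"
    proof
      show "range (\<lambda>n::int. (S #>\<^bsub>G\<^esub> g) [^]\<^bsub>G Mod S\<^esub> n) \<subseteq> carrier (G Mod S)"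
        using pw g group.int_pow_closed[OF G g] by (auto simp: carrier_FactGroup)
      show "carrier (G Mod S) \<subseteq> range (\<lambda>n::int. (S #>\<^bsub>G\<^esub> g) [^]\<^bsub>G Mod S\<^esub> n)"
      proof
        fix Z assume "Z \<in> carrier (G Mod S)"
        then obtain x where x: "x \<in> carrier G" and Z: "Z = S #>\<^bsub>G\<^esub> x" by (auto simp: carrier_FactGroup)
        obtain s k where s: "s \<in> S" and xs: "x = s \<otimes>\<^bsub>G\<^esub> g [^]\<^bsub>G\<^esub> (k::nat)" using rep[OF x] by blast
        have sc: "s \<in> carrier G" using s Ssub by blast
        have "Z = (S #>\<^bsub>G\<^esub> s) #>\<^bsub>G\<^esub> (g [^]\<^bsub>G\<^esub> k)"
          using Z xs group.coset_mult_assoc[OF G Ssub sc monoid.nat_pow_closed[OF group.is_monoid[OF G] g]] by simp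
        also have "\<dots> = S #>\<^bsub>G\<^esub> (g [^]\<^bsub>G\<^esub> (int k))" using subgroup.rcos_const[OF sub G s] by (simp add: int_pow_int)
        finally show "Z \<in> range (\<lambda>n::int. (S #>\<^bsub>G\<^esub> g) [^]\<^bsub>G Mod S\<^esub> n)" using pw by auto
      qed
    qed
  qed
qed



lemma int_to_nat_pow:
  assumes G: "group G" and fin: "finite (carrier G)" and x: "x \<in> carrier G"
  shows "\<exists>n::nat. x [^]\<^bsub>G\<^esub> (i::int) = x [^]\<^bsub>G\<^esub> n"
proof -
  interpret G: group G by (rule G)
  define M where "M = int (card (carrier G))"
  have M0: "M > 0" using fin unfolding M_def 
    using G.one_closed by (metis card_gt_0_iff empty_iff of_nat_0_less_iff)
  have xM: "x [^]\<^bsub>G\<^esub> M = \<one>\<^bsub>G\<^esub>" unfolding M_def using G.pow_order_eq_1[OF x] by (simp add: int_pow_int order_def)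
  have "i = M * (i div M) + i mod M" by simp
  hence "x [^]\<^bsub>G\<^esub> i = x [^]\<^bsub>G\<^esub> (M * (i div M)) \<otimes>\<^bsub>G\<^esub> x [^]\<^bsub>G\<^esub> (i mod M)"
    using G.int_pow_mult[OF x] by metis
  also have "x [^]\<^bsub>G\<^esub> (M * (i div M)) = \<one>\<^bsub>G\<^esub>"
    using G.int_pow_pow[OF x, of M "i div M"] xM by simp
  finally have "x [^]\<^bsub>G\<^esub> i = x [^]\<^bsub>G\<^esub> (i mod M)" using x by simp
  also have "\<dots> = x [^]\<^bsub>G\<^esub> (nat (i mod M))"
    using M0 by (metis int_pow_int pos_mod_sign int_nat_eq)
  finally show ?thesis by blast
qed

lemma cyclic_factor:
  assumes G: "group G" and fin: "finite (carrier G)" and zg: "z_group G"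
    and K: "group K" and f: "f \<in> hom K G" and inj: "inj_on f (carrier K)"
    and p: "Factorial_Ring.prime (p::nat)" and cK: "card (carrier K) = p ^ e"
    and mult: "multiplicity p (order G) = e"
  shows "\<exists>g\<in>carrier K. \<forall>b\<in>carrier K. \<exists>n::nat. b = g [^]\<^bsub>K\<^esub> n"
proof -
  interpret gh: group_hom K G f using K G f by (simp add: group_hom_def group_hom_axioms_def)
  define P where "P = f ` carrier K"
  have sub: "subgroup P G" unfolding P_def by (rule gh.img_is_subgroup)
  have cP: "card P = p ^ e" unfolding P_def using card_image[OF inj] cK by simp
  have syl: "sylow_subgroup G p P" unfolding sylow_subgroup_def using p sub cP mult by simp
  have cyc: "cyclic_group (subgroup_generated G P)" using zg syl unfolding z_group_def by blast
  have carP: "carrier (subgroup_generated G P) = P"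
    by (rule subgroup.carrier_subgroup_generated_subgroup[OF sub])
  have SG: "group (subgroup_generated G P)" by (rule group.group_subgroup_generated[OF G])
  obtain x where xP: "x \<in> P" and rng: "P = range (\<lambda>n::int. x [^]\<^bsub>subgroup_generated G P\<^esub> n)"
    using cyc unfolding group.cyclic_group[OF SG] carP by blast
  obtain g where g: "g \<in> carrier K" and xg: "x = f g" using xP unfolding P_def by blast
  have finSG: "finite (carrier (subgroup_generated G P))" unfolding carP using fin sub
    by (meson finite_subset subgroup.subset)
  show ?thesis
  proof (intro bexI[OF _ g] ballI)
    fix b assume b: "b \<in> carrier K"
    have "f b \<in> P" unfolding P_def using b by blast
    then obtain i::int where "f b = x [^]\<^bsub>subgroup_generated G P\<^esub> i" using rng by blast
    moreover obtain n::nat where "x [^]\<^bsub>subgroup_generated G P\<^esub> i = x [^]\<^bsub>subgroup_generated G P\<^esub> n"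
      using int_to_nat_pow[OF SG finSG, of x i] xP carP by blast
    ultimately have "f b = x [^]\<^bsub>G\<^esub> n" by (simp add: pow_subgroup_generated)
    also have "\<dots> = f (g [^]\<^bsub>K\<^esub> n)" using xg gh.hom_nat_pow[OF g] by simp
    finally have "f b = f (g [^]\<^bsub>K\<^esub> n)" .
    hence "b = g [^]\<^bsub>K\<^esub> n" using inj b by (meson inj_onD monoid.nat_pow_closed group.is_monoid K g)
    then show "\<exists>n::nat. b = g [^]\<^bsub>K\<^esub> n" by blast
  qed
qed



lemma zero_in: "group (add_group A) \<Longrightarrow> zero_b A \<in> carrier_b A"
  using monoid.one_closed[OF group.is_monoid, of "add_group A"] by simp

lemma lambda_pair:
  assumes "group (add_group A)" "group (add_group B)" "a \<in> carrier_b A" "b \<in> carrier_b B"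
  shows "lambda_b (pair_brace A B) (a,b) (a',b') = (lambda_b A a a', lambda_b B b b')"
  using neg_pair[OF assms] by (simp add: lambda_b_def)

lemma soc_pair:
  assumes GA: "group (add_group A)" and GB: "group (add_group B)"
  shows "soc (pair_brace A B) = soc A \<times> soc B"
proof -
  have "((a,b) \<in> soc (pair_brace A B)) = ((a,b) \<in> soc A \<times> soc B)" for a b
  proof
    assume h: "(a,b) \<in> soc (pair_brace A B)"
    then have a: "a \<in> carrier_b A" and b: "b \<in> carrier_b B" by (auto simp: soc_def)
    have "lambda_b A a a' = a' \<and> lambda_b B b b' = b'" if "a' \<in> carrier_b A" "b' \<in> carrier_b B" for a' b'
      using h that lambda_pair[OF GA GB a b, of a' b'] by (auto simp: soc_def)
    then show "(a,b) \<in> soc A \<times> soc B" using a b zero_in[OF GA] zero_in[OF GB] by (auto simp: soc_def)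
  next
    assume "(a,b) \<in> soc A \<times> soc B"
    then show "(a,b) \<in> soc (pair_brace A B)" using lambda_pair[OF GA GB] by (auto simp: soc_def)
  qed
  then show ?thesis by (simp add: set_eq_iff split_paired_All)
qed

lemma soc_semi:
  assumes GN: "group (add_group N)" and GH: "group (add_group H)"
    and triv: "\<And>x z. x \<in> carrier_b N \<Longrightarrow> z \<in> carrier_b N \<Longrightarrow> circ_b N x z = plus_b N x z"
    and act: "\<And>y x. y \<in> carrier_b H \<Longrightarrow> x \<in> carrier_b N \<Longrightarrow> \<alpha> y x \<in> carrier_b N"
  shows "soc (semidirect_brace N H \<alpha>) = carrier_b N \<times> (soc H \<inter> ker_action H N \<alpha>)"
proof -
  interpret PN: group "add_group N" by (rule GN)
  have lam: "lambda_b (semidirect_brace N H \<alpha>) (x,y) (x',y') = (\<alpha> y x', lambda_b H y y')"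
    if "x \<in> carrier_b N" "y \<in> carrier_b H" "x' \<in> carrier_b N" for x y x' y'
  proof -
    have "plus_b N (neg_b N x) (circ_b N x (\<alpha> y x')) = \<alpha> y x'"
      using triv[OF that(1) act[OF that(2,3)]] PN.l_inv[of x] PN.m_assoc[of "neg_b N x" x "\<alpha> y x'"]
        PN.inv_closed[of x] act[OF that(2,3)] that(1) PN.l_one[of "\<alpha> y x'"] by (simp add: neg_b_def)
    then show ?thesis using neg_semi[OF GN GH that(1,2)] by (simp add: lambda_b_def)
  qed
  have "((x,y) \<in> soc (semidirect_brace N H \<alpha>)) = ((x,y) \<in> carrier_b N \<times> (soc H \<inter> ker_action H N \<alpha>))" for x y
    proof
      assume h: "(x,y) \<in> soc (semidirect_brace N H \<alpha>)"
      then have x: "x \<in> carrier_b N" and y: "y \<in> carrier_b H" by (auto simp: soc_def)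
      have "\<alpha> y x' = x' \<and> lambda_b H y y' = y'" if "x' \<in> carrier_b N" "y' \<in> carrier_b H" for x' y'
        using h that lam[OF x y, of x' y'] by (auto simp: soc_def)
      then show "(x,y) \<in> carrier_b N \<times> (soc H \<inter> ker_action H N \<alpha>)"
        using x y zero_in[OF GN] zero_in[OF GH] by (auto simp: soc_def ker_action_def)
    next
      assume "(x,y) \<in> carrier_b N \<times> (soc H \<inter> ker_action H N \<alpha>)"
      then show "(x,y) \<in> soc (semidirect_brace N H \<alpha>)" using lam by (auto simp: soc_def ker_action_def)
    qed
  then show ?thesis by (simp add: set_eq_iff split_paired_All)
qed

lemma lambda_prod:
  assumes "\<And>i. i \<in> I \<Longrightarrow> group (add_group (Bs i))" "y \<in> carrier_b (prod_brace I Bs)"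
  shows "lambda_b (prod_brace I Bs) y z = (\<lambda>i\<in>I. lambda_b (Bs i) (y i) (z i))"
  using neg_prod[OF assms] by (simp add: lambda_b_def cong: restrict_cong)

lemma emb_in:
  assumes "\<And>i. i \<in> I \<Longrightarrow> group (add_group (Bs i))" "j \<in> I" "b \<in> carrier_b (Bs j)"
  shows "emb I Bs j b \<in> carrier_b (prod_brace I Bs)"
  using assms by (auto simp: emb_def intro!: zero_in)

lemma soc_prod_iff:
  assumes G: "\<And>i. i \<in> I \<Longrightarrow> group (add_group (Bs i))"
  shows "y \<in> soc (prod_brace I Bs) \<longleftrightarrow> y \<in> carrier_b (prod_brace I Bs) \<and> (\<forall>j\<in>I. y j \<in> soc (Bs j))"
proof
  assume h: "y \<in> soc (prod_brace I Bs)"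
  then have y: "y \<in> carrier_b (prod_brace I Bs)" by (simp add: soc_def)
  have "y j \<in> soc (Bs j)" if j: "j \<in> I" for j
  proof -
    have "lambda_b (Bs j) (y j) b = b" if b: "b \<in> carrier_b (Bs j)" for b
    proof -
      have "lambda_b (prod_brace I Bs) y (emb I Bs j b) = emb I Bs j b"
        using h emb_in[of I Bs, OF G j b] by (simp add: soc_def)
      then have "lambda_b (prod_brace I Bs) y (emb I Bs j b) j = emb I Bs j b j" by simp
      then show ?thesis using lambda_prod[OF G y] j by (simp add: emb_def)
    qed
    then show ?thesis using y j by (auto simp: soc_def PiE_iff)
  qed
  then show "y \<in> carrier_b (prod_brace I Bs) \<and> (\<forall>j\<in>I. y j \<in> soc (Bs j))" using y by blast
next
  assume h: "y \<in> carrier_b (prod_brace I Bs) \<and> (\<forall>j\<in>I. y j \<in> soc (Bs j))"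
  have "lambda_b (prod_brace I Bs) y z = z" if z: "z \<in> carrier_b (prod_brace I Bs)" for z
    using lambda_prod[of I Bs y z, OF G] h z by (auto simp: soc_def PiE_iff extensional_def intro!: ext)
  then show "y \<in> soc (prod_brace I Bs)" using h by (simp add: soc_def)
qed

lemma pow_prod:
  assumes "y \<in> carrier_b (prod_brace I Bs)"
  shows "y [^]\<^bsub>mult_group (prod_brace I Bs)\<^esub> (n::nat) = (\<lambda>i\<in>I. y i [^]\<^bsub>mult_group (Bs i)\<^esub> n)"
proof (induction n)
  case 0 then show ?case by (simp add: mult_group_prod)
next
  case (Suc n) then show ?case by (simp add: mult_group_prod cong: restrict_cong)
qed

lemma pow_pair:
  "(x,y) [^]\<^bsub>mult_group (pair_brace A B)\<^esub> (n::nat) = (x [^]\<^bsub>mult_group A\<^esub> n, y [^]\<^bsub>mult_group B\<^esub> n)"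
  by (induction n) (simp_all add: mult_group_pair)



lemma crt_fin:
  fixes md u :: "'i \<Rightarrow> nat"
  assumes "finite S" "\<forall>x\<in>S. \<forall>y\<in>S. x \<noteq> y \<longrightarrow> coprime (md x) (md y)" "\<forall>x\<in>S. md x \<noteq> 0"
  shows "\<exists>k::nat. \<forall>x\<in>S. k mod md x = u x mod md x"
  using assms
proof (induction S rule: finite_induct)
  case empty then show ?case by simp
next
  case (insert a S)
  then obtain k0 where k0: "\<forall>x\<in>S. k0 mod md x = u x mod md x" by auto
  define M where "M = (\<Prod>x\<in>S. md x)"
  have cop: "coprime (md a) M" unfolding M_def
    using insert by (intro prod_coprime_right) auto
  have M0: "M \<noteq> 0" unfolding M_def using insert by simp
  have a0: "md a \<noteq> 0" using insert by simp
  obtain k q1 q2 where kk: "k = u a + q1 * md a" "k = k0 + q2 * M"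
    using chinese_remainder[OF cop a0 M0, of "u a" k0] by blast
  have "k mod md x = u x mod md x" if "x \<in> insert a S" for x
  proof (cases "x = a")
    case True then show ?thesis using kk(1) by simp
  next
    case False
    then have x: "x \<in> S" using that by simp
    have "md x dvd M" unfolding M_def using x insert(1) by (simp add: dvd_prodI)
    then obtain c where "M = md x * c" by blast
    then have "k = k0 + md x * (q2 * c)" using kk(2) by (simp add: ac_simps)
    then have "k mod md x = k0 mod md x" by simp
    then show ?thesis using k0 x by simp
  qed
  then show ?case by blast
qed


lemma zero_soc:
  assumes "group (add_group B)" "group (mult_group B)"
  shows "zero_b B \<in> soc B"
proof -
  interpret P: group "add_group B" by fact
  interpret M: group "mult_group B" by fact
  have "lambda_b B (zero_b B) b = b" if "b \<in> carrier_b B" for b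
    using that P.inv_one M.l_one[of b] P.l_one[of b] by (simp add: lambda_b_def neg_b_def)
  then show ?thesis using P.one_closed by (simp add: soc_def)
qed

lemma emb_mult:
  assumes G: "\<And>k. k \<in> I \<Longrightarrow> group (mult_group (Bs k))" and j: "j \<in> I"
    and a: "a \<in> carrier_b (Bs j)" and b: "b \<in> carrier_b (Bs j)"
  shows "circ_b (prod_brace I Bs) (emb I Bs j a) (emb I Bs j b) = emb I Bs j (circ_b (Bs j) a b)"
proof -
  have "circ_b (Bs k) (zero_b (Bs k)) (zero_b (Bs k)) = zero_b (Bs k)" if "k \<in> I" for k
    using monoid.l_one[OF group.is_monoid[OF G[OF that]], of "zero_b (Bs k)"]
      monoid.one_closed[OF group.is_monoid[OF G[OF that]]] by simp
  then show ?thesis by (auto simp: emb_def intro!: restrict_ext)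
qed

lemma emb_hom:
  assumes GA: "\<And>k. k \<in> I \<Longrightarrow> group (add_group (Bs k))"
    and G: "\<And>k. k \<in> I \<Longrightarrow> group (mult_group (Bs k))" and j: "j \<in> I"
  shows "emb I Bs j \<in> hom (mult_group (Bs j)) (mult_group (prod_brace I Bs))"
    and "inj_on (emb I Bs j) (carrier_b (Bs j))"
proof -
  show "emb I Bs j \<in> hom (mult_group (Bs j)) (mult_group (prod_brace I Bs))"
    unfolding hom_def using emb_in[of I Bs, OF GA j] emb_mult[of I Bs, OF G j]
      monoid.m_closed[OF group.is_monoid[OF G[OF j]]] by (auto simp del: prod_brace_simps(1))
  show "inj_on (emb I Bs j) (carrier_b (Bs j))"
  proof
    fix a b assume "a \<in> carrier_b (Bs j)" "b \<in> carrier_b (Bs j)" "emb I Bs j a = emb I Bs j b"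
    then have "emb I Bs j a j = emb I Bs j b j" by simp
    then show "a = b" using j by (simp add: emb_def)
  qed
qed

lemma emb_pow:
  assumes G: "\<And>k. k \<in> I \<Longrightarrow> group (mult_group (Bs k))" and GA: "\<And>k. k \<in> I \<Longrightarrow> group (add_group (Bs k))"
    and j: "j \<in> I" and b: "b \<in> carrier_b (Bs j)"
  shows "emb I Bs j b [^]\<^bsub>mult_group (prod_brace I Bs)\<^esub> (n::nat) = emb I Bs j (b [^]\<^bsub>mult_group (Bs j)\<^esub> n)"
proof -
  have "emb I Bs j b [^]\<^bsub>mult_group (prod_brace I Bs)\<^esub> n = (\<lambda>i\<in>I. emb I Bs j b i [^]\<^bsub>mult_group (Bs i)\<^esub> n)"
    by (rule pow_prod[OF emb_in[of I Bs, OF GA j b]])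
  also have "\<dots> = emb I Bs j (b [^]\<^bsub>mult_group (Bs j)\<^esub> n)"
    using monoid.nat_pow_one[OF group.is_monoid[OF G]] by (auto simp: emb_def intro!: restrict_ext)
  finally show ?thesis .
qed

lemma pow_mod_nat:
  assumes G: "group G" and x: "x \<in> carrier G" and xm: "x [^]\<^bsub>G\<^esub> (md::nat) = \<one>\<^bsub>G\<^esub>"
  shows "x [^]\<^bsub>G\<^esub> (k::nat) = x [^]\<^bsub>G\<^esub> (k mod md)"
proof -
  interpret G: group G by (rule G)
  have "x [^]\<^bsub>G\<^esub> k = x [^]\<^bsub>G\<^esub> (md * (k div md)) \<otimes>\<^bsub>G\<^esub> x [^]\<^bsub>G\<^esub> (k mod md)"
    using G.nat_pow_mult[OF x, of "md * (k div md)" "k mod md"] by simp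
  also have "x [^]\<^bsub>G\<^esub> (md * (k div md)) = \<one>\<^bsub>G\<^esub>"
    using G.nat_pow_pow[OF x, of md "k div md"] xm by simp
  finally show ?thesis using x by simp
qed

lemma mult_pp:
  assumes "Factorial_Ring.prime (p::nat)" "Factorial_Ring.prime q"
  shows "multiplicity p (q ^ k) = (if p = q then k else 0)"
  using assms prime_elem_multiplicity_power_distrib[of p q k] prime_multiplicity_other[of p q]
  by (auto simp: prime_gt_0_nat)

lemma mult_prod_pp:
  assumes "Factorial_Ring.prime (p::nat)" "finite S" "\<And>x. x \<in> S \<Longrightarrow> Factorial_Ring.prime (pr x)"
  shows "multiplicity p (\<Prod>x\<in>S. pr x ^ e x) = (\<Sum>x\<in>S. if p = pr x then e x else 0)"
proof -
  have "0 \<notin> (\<lambda>x. pr x ^ e x) ` S" using assms(3) by (force dest: prime_gt_0_nat)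
  then have "multiplicity p (\<Prod>x\<in>S. pr x ^ e x) = (\<Sum>x\<in>S. multiplicity p (pr x ^ e x))"
    using prime_elem_multiplicity_prod_distrib[of p "\<lambda>x. pr x ^ e x" S] assms(1,2) by simp
  also have "\<dots> = (\<Sum>x\<in>S. if p = pr x then e x else 0)"
    using mult_pp[OF assms(1) assms(3)] by (intro sum.cong) auto
  finally show ?thesis .
qed

lemma sum_if_inj:
  assumes "finite S" "x0 \<in> S" "inj_on pr S" "pr x0 = p"
  shows "(\<Sum>x\<in>S. if p = pr x then (e x::nat) else 0) = e x0"
proof -
  have "(\<Sum>x\<in>S. if p = pr x then e x else 0) = (\<Sum>x\<in>S. if x = x0 then e x else 0)"
    using assms by (intro sum.cong) (auto dest: inj_onD)
  also have "\<dots> = e x0" using assms by simp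
  finally show ?thesis .
qed

lemma sum_if_none:
  assumes "p \<notin> pr ` S"
  shows "(\<Sum>x\<in>S. if p = pr x then (e x::nat) else 0) = 0"
  using assms by (intro sum.neutral) auto



lemma lb_addg: "left_brace B \<Longrightarrow> group (add_group B)"
  using lb_add comm_group_def by blast

theorem mainTheorem9:
  fixes v m r :: nat
    and qs ps :: "nat \<Rightarrow> nat" and \<gamma> \<beta> :: "nat \<Rightarrow> nat"
    and As :: "nat \<Rightarrow> 'a brace" and Bs :: "nat \<Rightarrow> 'b brace"
    and \<alpha> :: "(nat \<Rightarrow> 'b) \<Rightarrow> (nat \<Rightarrow> 'b) \<Rightarrow> (nat \<Rightarrow> 'b)"
  defines "Abar \<equiv> prod_brace {..<v} As"
    and "H \<equiv> prod_brace {..<m} Bs"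
    and "N \<equiv> prod_brace {m..<r} Bs"
  defines "Bbar \<equiv> semidirect_brace N H \<alpha>"
  defines "A \<equiv> pair_brace Abar Bbar"
  defines "I \<equiv> (\<lambda>j. {b \<in> soc (Bs j). emb {..<m} Bs j b \<in> ker_action H N \<alpha>})"
  assumes "m \<le> r"
    and qs_prime: "\<forall>i<v. Factorial_Ring.prime (qs i) \<and> odd (qs i)"
    and ps_prime: "\<forall>j<r. Factorial_Ring.prime (ps j) \<and> odd (ps j)"
    and qs_dist: "inj_on qs {..<v}"
    and ps_mono: "strict_mono_on {..<r} ps"
    and qs_ps_dist: "qs ` {..<v} \<inter> ps ` {..<r} = {}"
    and \<gamma>_pos: "\<forall>i<v. \<gamma> i > 0"
    and \<beta>_pos: "\<forall>j<r. \<beta> j > 0"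
    and As_brace: "\<forall>i<v. left_brace (As i) \<and> cyclic_group (add_group (As i))
                      \<and> card (carrier_b (As i)) = qs i ^ \<gamma> i"
    and Bs_brace: "\<forall>j<r. left_brace (Bs j) \<and> cyclic_group (add_group (Bs j))
                      \<and> card (carrier_b (Bs j)) = ps j ^ \<beta> j"
    and Bs_trivial: "\<forall>j. m \<le> j \<and> j < r \<longrightarrow> trivial_brace (Bs j)"
    and \<alpha>_hom: "action_hom H N \<alpha>"
    and \<alpha>_nontriv_restr: "\<forall>j<m. \<exists>b\<in>carrier_b (Bs j). emb {..<m} Bs j b \<notin> ker_action H N \<alpha>"
    and \<alpha>_nontriv_act: "\<forall>j. m \<le> j \<and> j < r \<longrightarrow>
          (\<exists>y\<in>carrier_b H. \<exists>b\<in>carrier_b (Bs j). \<alpha> y (emb {m..<r} Bs j b) \<noteq> emb {m..<r} Bs j b)"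
    and A_brace: "left_brace A"
    and A_finite: "finite (carrier_b A)"
    and A_odd: "odd (card (carrier_b A))"
    and A_add_cyclic: "cyclic_group (add_group A)"
    and A_zgroup: "z_group (mult_group A)"
  shows "soc A = soc Abar \<times> (carrier_b N \<times> (\<Pi>\<^sub>E j\<in>{..<m}. I j))
         \<and> cyclic_group (mult_group A Mod soc A)"
proof -
  have GAa: "group (add_group (As i))" "group (mult_group (As i))" if "i < v" for i
    using As_brace that lb_addg lb_mult by auto
  have GAb: "group (add_group (Bs j))" "group (mult_group (Bs j))" if "j < r" for j
    using Bs_brace that lb_addg lb_mult by auto
  have GAbar: "group (add_group Abar)" "group (mult_group Abar)"
    unfolding Abar_def add_group_prod mult_group_prod using GAa by (auto intro!: product_group)
  have GH: "group (add_group H)" "group (mult_group H)"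
    unfolding H_def add_group_prod mult_group_prod using GAb \<open>m \<le> r\<close> by (auto intro!: product_group)
  have GN: "group (add_group N)" "group (mult_group N)"
    unfolding N_def add_group_prod mult_group_prod using GAb by (auto intro!: product_group)
  have GBbar: "group (add_group Bbar)"
    unfolding Bbar_def add_group_semi using GN GH by (auto intro!: DirProd_group)
  have triv: "circ_b N x z = plus_b N x z" if "x \<in> carrier_b N" "z \<in> carrier_b N" for x z
    using that Bs_trivial unfolding N_def trivial_brace_def by (auto simp: PiE_iff intro!: restrict_ext)
  have iso: "\<alpha> y \<in> Group.iso (add_group N) (add_group N)" if "y \<in> carrier_b H" for y
    using \<alpha>_hom that unfolding action_hom_def by blast
  have act_cl: "\<alpha> y x \<in> carrier_b N" if "y \<in> carrier_b H" "x \<in> carrier_b N" for y x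
    using iso[OF that(1)] that(2) unfolding Group.iso_def hom_def by auto
  have act0: "\<alpha> y (zero_b N) = zero_b N" if "y \<in> carrier_b H" for y
    using hom_one[of "\<alpha> y" "add_group N" "add_group N"] iso[OF that] GN unfolding Group.iso_def by simp
  have act_inj: "inj_on (\<alpha> y) (carrier_b N)" if "y \<in> carrier_b H" for y
    using iso[OF that] unfolding Group.iso_def bij_betw_def by simp
  have act_comp: "\<alpha> (circ_b H y y') x = \<alpha> y (\<alpha> y' x)" if "y \<in> carrier_b H" "y' \<in> carrier_b H" "x \<in> carrier_b N" for y y' x
    using \<alpha>_hom that unfolding action_hom_def by blast
  define K where "K = ker_action H N \<alpha>"
  interpret MH: group "mult_group H" by (rule GH(2))
  interpret MN: group "mult_group N" by (rule GN(2))
  have zH: "zero_b H \<in> carrier_b H" using MH.one_closed by simp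
  have zN: "zero_b N \<in> carrier_b N" using MN.one_closed by simp
  have K0: "zero_b H \<in> K"
  proof -
    have "\<alpha> (zero_b H) x = x" if x: "x \<in> carrier_b N" for x
    proof -
      have "\<alpha> (zero_b H) (\<alpha> (zero_b H) x) = \<alpha> (zero_b H) x"
        using act_comp[OF zH zH x] MH.l_one[of "zero_b H"] zH by simp
      then show ?thesis using act_inj[OF zH] act_cl[OF zH x] x by (meson inj_onD)
    qed
    then show ?thesis using zH by (simp add: K_def ker_action_def)
  qed
  have Kmul: "circ_b H y y' \<in> K" if "y \<in> K" "y' \<in> K" for y y'
    using that act_comp MH.m_closed[of y y'] by (auto simp: K_def ker_action_def)
  have Kpow: "y [^]\<^bsub>mult_group H\<^esub> (n::nat) \<in> K" if "y \<in> K" for y n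
  proof (induction n)
    case 0 then show ?case using K0 by simp
  next
    case (Suc n) then show ?case using Kmul[OF Suc that] by simp
  qed
  have socA: "soc A = soc Abar \<times> soc Bbar" unfolding A_def by (rule soc_pair[OF GAbar(1) GBbar])
  have socB: "soc Bbar = carrier_b N \<times> (soc H \<inter> K)"
    unfolding Bbar_def K_def by (rule soc_semi[OF GN(1) GH(1) triv act_cl])
  have key: "soc H \<inter> K = (\<Pi>\<^sub>E j\<in>{..<m}. I j)"
  proof
    show "soc H \<inter> K \<subseteq> (\<Pi>\<^sub>E j\<in>{..<m}. I j)"
    proof
      fix y assume y: "y \<in> soc H \<inter> K"
      have yc: "y \<in> carrier_b H" using y by (simp add: soc_def)
      have ysoc: "\<forall>j\<in>{..<m}. y j \<in> soc (Bs j)"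
        using y soc_prod_iff[of "{..<m}" Bs y] GAb \<open>m \<le> r\<close> unfolding H_def by auto
      have embK: "emb {..<m} Bs j (y j) \<in> K" if j: "j < m" for j
      proof -
        define M where "M = (\<Prod>k\<in>{..<m}-{j}. ps k ^ \<beta> k)"
        define n where "n = ps j ^ \<beta> j"
        have jr: "j < r" using j \<open>m \<le> r\<close> by simp
        interpret Bj: group "mult_group (Bs j)" using GAb(2)[OF jr] .
        have yj: "y j \<in> carrier_b (Bs j)" using yc j by (auto simp: H_def)
        have ordk: "y k [^]\<^bsub>mult_group (Bs k)\<^esub> (ps k ^ \<beta> k) = zero_b (Bs k)" if "k < m" for k
        proof -
          have kr: "k < r" using that \<open>m \<le> r\<close> by simp
          have "y k \<in> carrier_b (Bs k)" using yc that by (auto simp: H_def)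
          then show ?thesis using group.pow_order_eq_1[OF GAb(2)[OF kr], of "y k"] Bs_brace kr
            by (simp add: order_def)
        qed
        have yM: "y [^]\<^bsub>mult_group H\<^esub> M = emb {..<m} Bs j (y j [^]\<^bsub>mult_group (Bs j)\<^esub> M)"
        proof -
          have "y [^]\<^bsub>mult_group H\<^esub> M = (\<lambda>k\<in>{..<m}. y k [^]\<^bsub>mult_group (Bs k)\<^esub> M)"
            unfolding H_def by (rule pow_prod) (use yc H_def in simp)
          also have "\<dots> = emb {..<m} Bs j (y j [^]\<^bsub>mult_group (Bs j)\<^esub> M)"
            unfolding emb_def
          proof (rule restrict_ext)
            fix k assume k: "k \<in> {..<m}"
            show "y k [^]\<^bsub>mult_group (Bs k)\<^esub> M = (if k = j then y j [^]\<^bsub>mult_group (Bs j)\<^esub> M else zero_b (Bs k))"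
            proof (cases "k = j")
              case True then show ?thesis by simp
            next
              case False
              have kr: "k < r" using k \<open>m \<le> r\<close> by simp
              have ykc: "y k \<in> carrier_b (Bs k)" using yc k by (auto simp: H_def)
              have "ps k ^ \<beta> k dvd M" unfolding M_def using k False by (intro dvd_prodI) auto
              then obtain c where c: "M = ps k ^ \<beta> k * c" by blast
              have "y k [^]\<^bsub>mult_group (Bs k)\<^esub> M = (y k [^]\<^bsub>mult_group (Bs k)\<^esub> (ps k ^ \<beta> k)) [^]\<^bsub>mult_group (Bs k)\<^esub> c"
                unfolding c using monoid.nat_pow_pow[OF group.is_monoid[OF GAb(2)[OF kr]], of "y k"] ykc by simp
              also have "\<dots> = zero_b (Bs k)" using ordk k monoid.nat_pow_one[OF group.is_monoid[OF GAb(2)[OF kr]]] by simp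
              finally show ?thesis using False by simp
            qed
          qed
          finally show ?thesis .
        qed
        have yMK: "emb {..<m} Bs j (y j [^]\<^bsub>mult_group (Bs j)\<^esub> M) \<in> K"
          using Kpow[of y M] y yM by simp
        have psinj: "inj_on ps {..<r}" using ps_mono by (rule strict_mono_on_imp_inj_on)
        have cop: "coprime M n" unfolding M_def n_def
        proof (intro prod_coprime_left)
          fix k assume k: "k \<in> {..<m}-{j}"
          have "ps k \<noteq> ps j" using k jr \<open>m \<le> r\<close> psinj by (auto dest: inj_onD)
          then have "coprime (ps k) (ps j)" using ps_prime k jr \<open>m \<le> r\<close> by (intro primes_coprime) auto
          then show "coprime (ps k ^ \<beta> k) (ps j ^ \<beta> j)" by simp
        qed
        have n1: "n \<noteq> 1"
        proof -
          have "ps j > 1" using ps_prime jr prime_gt_1_nat by blast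
          moreover have "\<beta> j > 0" using \<beta>_pos jr by blast
          ultimately have "ps j ^ \<beta> j > 1" by (metis One_nat_def one_less_power)
          then show ?thesis unfolding n_def by linarith
        qed
        obtain a b where ab: "M * a = n * b + 1" using coprime_bezout_strong[OF cop n1] by blast
        have yjn: "y j [^]\<^bsub>mult_group (Bs j)\<^esub> n = zero_b (Bs j)" using ordk j n_def by simp
        have "(y j [^]\<^bsub>mult_group (Bs j)\<^esub> M) [^]\<^bsub>mult_group (Bs j)\<^esub> a = y j [^]\<^bsub>mult_group (Bs j)\<^esub> (n * b + 1)"
          using Bj.nat_pow_pow[of "y j" M a] yj ab by simp
        also have "\<dots> = y j"
        proof -
          have "y j [^]\<^bsub>mult_group (Bs j)\<^esub> (n * b) = zero_b (Bs j)"
            using Bj.nat_pow_pow[of "y j" n b] yjn yj Bj.nat_pow_one[of b] by simp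
          then show ?thesis using Bj.nat_pow_mult[of "y j" "n*b" 1] yj Bj.l_one[of "y j"] by simp
        qed
        finally have yja: "(y j [^]\<^bsub>mult_group (Bs j)\<^esub> M) [^]\<^bsub>mult_group (Bs j)\<^esub> a = y j" .
        have "emb {..<m} Bs j (y j) = emb {..<m} Bs j (y j [^]\<^bsub>mult_group (Bs j)\<^esub> M) [^]\<^bsub>mult_group H\<^esub> a"
          unfolding H_def using emb_pow[of "{..<m}" Bs j "y j [^]\<^bsub>mult_group (Bs j)\<^esub> M" a] GAb \<open>m \<le> r\<close> j yj yja
            Bj.nat_pow_closed[of "y j" M] by simp
        then show ?thesis using Kpow[OF yMK, of a] by simp
      qed
      show "y \<in> (\<Pi>\<^sub>E j\<in>{..<m}. I j)"
        using yc ysoc embK unfolding I_def K_def[symmetric] by (auto simp: H_def PiE_iff)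
    qed
    show "(\<Pi>\<^sub>E j\<in>{..<m}. I j) \<subseteq> soc H \<inter> K"
    proof
      fix y assume y: "y \<in> (\<Pi>\<^sub>E j\<in>{..<m}. I j)"
      have yI: "y j \<in> soc (Bs j)" "emb {..<m} Bs j (y j) \<in> K" if "j < m" for j
        using y that unfolding I_def K_def by (auto simp: PiE_iff)
      have yc: "y \<in> carrier_b H" using y unfolding H_def I_def by (auto simp: PiE_iff soc_def)
      have ysoc: "y \<in> soc H" using soc_prod_iff[of "{..<m}" Bs y] GAb \<open>m \<le> r\<close> yc yI unfolding H_def by auto
      define tr where "tr n = (\<lambda>j\<in>{..<m}. if j < n then y j else zero_b (Bs j))" for n
      have "tr n \<in> K" for n
      proof (induction n)
        case 0
        have "tr 0 = zero_b H" unfolding tr_def H_def prod_brace_simps by (rule restrict_ext) simp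
        then show ?case using K0 by simp
      next
        case (Suc n)
        show ?case
        proof (cases "n < m")
          case True
          have nr: "n < r" using True \<open>m \<le> r\<close> by simp
          have "tr (Suc n) = circ_b H (tr n) (emb {..<m} Bs n (y n))"
            unfolding H_def prod_brace_simps tr_def[of "Suc n"]
          proof (rule restrict_ext)
            fix j assume j: "j \<in> {..<m}"
            have jr: "j < r" using j \<open>m \<le> r\<close> by simp
            interpret Bj: group "mult_group (Bs j)" using GAb(2)[OF jr] .
            have yj: "y j \<in> carrier_b (Bs j)" using yc j by (auto simp: H_def)
            show "(if j < Suc n then y j else zero_b (Bs j)) = circ_b (Bs j) (tr n j) (emb {..<m} Bs n (y n) j)"
              using j yj Bj.r_one[of "y j"] Bj.l_one[of "y j"] Bj.l_one[of "zero_b (Bs j)"] Bj.one_closed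
              by (auto simp: tr_def emb_def)
          qed
          then show ?thesis using Kmul[OF Suc yI(2)[OF True]] by simp
        next
          case False
          then have "tr (Suc n) = tr n" unfolding tr_def by (intro restrict_ext) auto
          then show ?thesis using Suc by simp
        qed
      qed
      moreover have "tr m = y" using y unfolding tr_def by (auto simp: PiE_iff extensional_def)
      ultimately show "y \<in> soc H \<inter> K" using ysoc by (metis IntI)
    qed
  qed
  have part1: "soc A = soc Abar \<times> (carrier_b N \<times> (\<Pi>\<^sub>E j\<in>{..<m}. I j))"
    using socA socB key by simp
  have part2: "cyclic_group (mult_group A Mod soc A)"
  proof -
    have GA: "group (mult_group A)" using lb_mult[OF A_brace] .
    have nrm: "soc A \<lhd> mult_group A" by (rule soc_normal[OF A_brace])
    have finA: "finite (carrier (mult_group A))" using A_finite by simp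
    have zg: "z_group (mult_group A)" by (rule A_zgroup)
    interpret MA: group "mult_group A" by (rule GA)
    interpret MAbar: group "mult_group Abar" by (rule GAbar(2))
    define QV where "QV = (\<Prod>i\<in>{..<v}. qs i ^ \<gamma> i)"
    define PR where "PR = (\<Prod>j\<in>{..<r}. ps j ^ \<beta> j)"
    have ordA: "order (mult_group A) = QV * PR"
    proof -
      have c1: "card (carrier_b Abar) = QV" unfolding Abar_def QV_def
        using As_brace by (simp add: card_PiE)
      have c2: "card (carrier_b N) = (\<Prod>j\<in>{m..<r}. ps j ^ \<beta> j)" unfolding N_def
        using Bs_brace by (simp add: card_PiE)
      have c3: "card (carrier_b H) = (\<Prod>j\<in>{..<m}. ps j ^ \<beta> j)" unfolding H_def
        using Bs_brace \<open>m \<le> r\<close> by (simp add: card_PiE)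
      have u: "{..<r} = {..<m} \<union> {m..<r}" using \<open>m \<le> r\<close> by auto
      have "PR = (\<Prod>j\<in>{..<m}. ps j ^ \<beta> j) * (\<Prod>j\<in>{m..<r}. ps j ^ \<beta> j)"
        unfolding PR_def u by (rule prod.union_disjoint) auto
      then show ?thesis unfolding order_def A_def Bbar_def using c1 c2 c3
        by (simp add: card_cartesian_product)
    qed
    have psinj: "inj_on ps {..<r}" using ps_mono by (rule strict_mono_on_imp_inj_on)
    have QV0: "QV \<noteq> 0" unfolding QV_def using qs_prime by (auto simp: prod_zero_iff prime_gt_0_nat)
    have PR0: "PR \<noteq> 0" unfolding PR_def using ps_prime by (auto simp: prod_zero_iff prime_gt_0_nat)
    have multq: "multiplicity (qs i) (order (mult_group A)) = \<gamma> i" if i: "i < v" for i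
    proof -
      have pq: "Factorial_Ring.prime (qs i)" using qs_prime i by blast
      have "multiplicity (qs i) QV = \<gamma> i" unfolding QV_def
        using mult_prod_pp[OF pq, of "{..<v}" qs \<gamma>] qs_prime sum_if_inj[of "{..<v}" i qs "qs i" \<gamma>] i qs_dist by simp
      moreover have "multiplicity (qs i) PR = 0" unfolding PR_def
        using mult_prod_pp[OF pq, of "{..<r}" ps \<beta>] ps_prime sum_if_none[of "qs i" ps "{..<r}" \<beta>] i qs_ps_dist by auto
      ultimately show ?thesis unfolding ordA using prime_elem_multiplicity_mult_distrib[of "qs i" QV PR] pq QV0 PR0 by simp
    qed
    have multp: "multiplicity (ps j) (order (mult_group A)) = \<beta> j" if j: "j < r" for j
    proof -
      have pp: "Factorial_Ring.prime (ps j)" using ps_prime j by blast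
      have "multiplicity (ps j) PR = \<beta> j" unfolding PR_def
        using mult_prod_pp[OF pp, of "{..<r}" ps \<beta>] ps_prime sum_if_inj[of "{..<r}" j ps "ps j" \<beta>] j psinj by simp
      moreover have "multiplicity (ps j) QV = 0" unfolding QV_def
        using mult_prod_pp[OF pp, of "{..<v}" qs \<gamma>] qs_prime sum_if_none[of "ps j" qs "{..<v}" \<gamma>] j qs_ps_dist by auto
      ultimately show ?thesis unfolding ordA using prime_elem_multiplicity_mult_distrib[of "ps j" QV PR] pp QV0 PR0 by simp
    qed
    have zAbar: "zero_b Abar \<in> carrier_b Abar" using MAbar.one_closed by simp
    have zBbar: "circ_b Bbar (zero_b N, zero_b H) (zero_b N, zero_b H) = (zero_b N, zero_b H)"
      unfolding Bbar_def using act0[OF zH] MN.l_one[OF MN.one_closed] MH.l_one[OF MH.one_closed] by simp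
    have genA: "\<exists>g\<in>carrier_b (As i). \<forall>b\<in>carrier_b (As i). \<exists>n::nat. b = g [^]\<^bsub>mult_group (As i)\<^esub> n"
      if i: "i < v" for i
    proof -
      define f where "f = (\<lambda>a. (emb {..<v} As i a, zero_b Bbar))"
      have eh: "emb {..<v} As i \<in> hom (mult_group (As i)) (mult_group Abar)"
           "inj_on (emb {..<v} As i) (carrier_b (As i))"
        unfolding Abar_def using emb_hom[of "{..<v}" As i] GAa i by auto
      have hom: "f \<in> hom (mult_group (As i)) (mult_group A)"
        using eh(1) zN zH zBbar unfolding hom_def f_def A_def Bbar_def by (auto simp: Pi_def)
      have inj: "inj_on f (carrier (mult_group (As i)))"
        using eh(2) unfolding f_def inj_on_def by simp
      have pq: "Factorial_Ring.prime (qs i)" using qs_prime i by blast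
      have cK: "card (carrier (mult_group (As i))) = qs i ^ \<gamma> i" using As_brace i by simp
      show ?thesis using cyclic_factor[OF GA finA zg GAa(2)[OF i] hom inj pq cK multq[OF i]] by simp
    qed
    have genB: "\<exists>g\<in>carrier_b (Bs j). \<forall>b\<in>carrier_b (Bs j). \<exists>n::nat. b = g [^]\<^bsub>mult_group (Bs j)\<^esub> n"
      if j: "j < m" for j
    proof -
      have jr: "j < r" using j \<open>m \<le> r\<close> by simp
      define f where "f = (\<lambda>b. (zero_b Abar, (zero_b N, emb {..<m} Bs j b)))"
      have eh: "emb {..<m} Bs j \<in> hom (mult_group (Bs j)) (mult_group H)"
           "inj_on (emb {..<m} Bs j) (carrier_b (Bs j))"
        unfolding H_def using emb_hom[of "{..<m}" Bs j] GAb j \<open>m \<le> r\<close> by auto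
      have hom: "f \<in> hom (mult_group (Bs j)) (mult_group A)"
        using eh(1) zN zAbar act0 MN.l_one[OF MN.one_closed] MAbar.l_one[OF MAbar.one_closed]
        unfolding hom_def f_def A_def Bbar_def by (auto simp: Pi_def)
      have inj: "inj_on f (carrier (mult_group (Bs j)))"
        using eh(2) unfolding f_def inj_on_def by simp
      have pp: "Factorial_Ring.prime (ps j)" using ps_prime jr by blast
      have cK: "card (carrier (mult_group (Bs j))) = ps j ^ \<beta> j" using Bs_brace jr by simp
      show ?thesis using cyclic_factor[OF GA finA zg GAb(2)[OF jr] hom inj pp cK multp[OF jr]] by simp
    qed
    have "\<forall>i. \<exists>g. i < v \<longrightarrow> g \<in> carrier_b (As i) \<and> (\<forall>b\<in>carrier_b (As i). \<exists>n::nat. b = g [^]\<^bsub>mult_group (As i)\<^esub> n)"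
      using genA by blast
    then obtain ga where ga: "\<And>i. i < v \<Longrightarrow> ga i \<in> carrier_b (As i) \<and> (\<forall>b\<in>carrier_b (As i). \<exists>n::nat. b = ga i [^]\<^bsub>mult_group (As i)\<^esub> n)"
      by metis
    have "\<forall>j. \<exists>g. j < m \<longrightarrow> g \<in> carrier_b (Bs j) \<and> (\<forall>b\<in>carrier_b (Bs j). \<exists>n::nat. b = g [^]\<^bsub>mult_group (Bs j)\<^esub> n)"
      using genB by blast
    then obtain gb where gb: "\<And>j. j < m \<Longrightarrow> gb j \<in> carrier_b (Bs j) \<and> (\<forall>b\<in>carrier_b (Bs j). \<exists>n::nat. b = gb j [^]\<^bsub>mult_group (Bs j)\<^esub> n)"
      by metis
    define gA where "gA = (\<lambda>i\<in>{..<v}. ga i)"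
    define gH where "gH = (\<lambda>j\<in>{..<m}. gb j)"
    define g where "g = (gA, (zero_b N, gH))"
    have gAc: "gA \<in> carrier_b Abar" unfolding gA_def Abar_def using ga by auto
    have gHc: "gH \<in> carrier_b H" unfolding gH_def H_def using gb by auto
    have gc: "g \<in> carrier (mult_group A)" unfolding g_def A_def Bbar_def using gAc gHc zN by simp
    have ordga: "ga i [^]\<^bsub>mult_group (As i)\<^esub> (qs i ^ \<gamma> i) = \<one>\<^bsub>mult_group (As i)\<^esub>" if "i < v" for i
      using group.pow_order_eq_1[OF GAa(2)[OF that], of "ga i"] ga[OF that] As_brace that by (simp add: order_def)
    have ordgb: "gb j [^]\<^bsub>mult_group (Bs j)\<^esub> (ps j ^ \<beta> j) = \<one>\<^bsub>mult_group (Bs j)\<^esub>" if "j < m" for j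
      using group.pow_order_eq_1[OF GAb(2), of j "gb j"] gb[OF that] Bs_brace that \<open>m \<le> r\<close> by (simp add: order_def)
    have powsemi: "(zero_b N, h) [^]\<^bsub>mult_group Bbar\<^esub> (n::nat) = (zero_b N, h [^]\<^bsub>mult_group H\<^esub> n)"
      if h: "h \<in> carrier_b H" for h n
    proof (induction n)
      case 0 then show ?case by (simp add: Bbar_def)
    next
      case (Suc n)
      have hn: "h [^]\<^bsub>mult_group H\<^esub> n \<in> carrier_b H" using MH.nat_pow_closed[of h n] h by simp
      show ?case using Suc act0[OF hn] MN.l_one[OF MN.one_closed] by (simp add: Bbar_def)
    qed
    define md where "md t = (if t < v then qs t ^ \<gamma> t else ps (t - v) ^ \<beta> (t - v))" for t
    have md_prime: "Factorial_Ring.prime (if t < v then qs t else ps (t - v))" if "t < v + m" for t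
      using that qs_prime ps_prime \<open>m \<le> r\<close> by auto
    have md_pp: "md t = (if t < v then qs t else ps (t - v)) ^ (if t < v then \<gamma> t else \<beta> (t - v))" for t
      unfolding md_def by simp
    have md_inj: "inj_on (\<lambda>t. if t < v then qs t else ps (t - v)) {..<v + m}"
    proof (rule inj_onI)
      fix s t assume s: "s \<in> {..<v + m}" and t: "t \<in> {..<v + m}"
        and e: "(if s < v then qs s else ps (s - v)) = (if t < v then qs t else ps (t - v))"
      show "s = t"
      proof (cases "s < v"; cases "t < v")
        assume "s < v" "t < v" then show ?thesis using e qs_dist by (auto dest: inj_onD)
      next
        assume "s < v" "\<not> t < v" then show ?thesis using e qs_ps_dist t \<open>m \<le> r\<close>
          by (metis (no_types, lifting) IntI add_diff_inverse_nat add_less_cancel_left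
              empty_iff image_eqI le_trans lessThan_iff less_imp_le_nat not_le)
      next
        assume "\<not> s < v" "t < v" then show ?thesis using e qs_ps_dist s \<open>m \<le> r\<close>
          by (metis (no_types, lifting) IntI add_diff_inverse_nat add_less_cancel_left
              empty_iff image_eqI le_trans lessThan_iff less_imp_le_nat not_le)
      next
        assume sv: "\<not> s < v" and tv: "\<not> t < v"
        moreover have "s - v < r" "t - v < r" using s t \<open>m \<le> r\<close> sv tv by auto
        ultimately show ?thesis using e psinj by (auto dest: inj_onD)
      qed
    qed
    have md_cop: "\<forall>s\<in>{..<v + m}. \<forall>t\<in>{..<v + m}. s \<noteq> t \<longrightarrow> coprime (md s) (md t)"
    proof (intro ballI impI)
      fix s t assume s: "s \<in> {..<v + m}" and t: "t \<in> {..<v + m}" and st: "s \<noteq> t"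
      have "(if s < v then qs s else ps (s - v)) \<noteq> (if t < v then qs t else ps (t - v))"
        using st inj_onD[OF md_inj _ s t] by blast
      then have "coprime (if s < v then qs s else ps (s - v)) (if t < v then qs t else ps (t - v))"
        using md_prime s t by (intro primes_coprime) auto
      then show "coprime (md s) (md t)" unfolding md_pp by simp
    qed
    have md0: "\<forall>t\<in>{..<v + m}. md t \<noteq> 0"
    proof
      fix t assume "t \<in> {..<v + m}"
      then have "Factorial_Ring.prime (if t < v then qs t else ps (t - v))" using md_prime by simp
      then have "(if t < v then qs t else ps (t - v)) \<noteq> 0" using not_prime_0 by metis
      then show "md t \<noteq> 0" unfolding md_pp by simp
    qed
    have rep: "\<exists>s\<in>soc A. \<exists>k::nat. x = s \<otimes>\<^bsub>mult_group A\<^esub> g [^]\<^bsub>mult_group A\<^esub> k"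
      if x: "x \<in> carrier (mult_group A)" for x
    proof -
      obtain xa xn xh where xx: "x = (xa, (xn, xh))" by (cases x) auto
      have xa: "xa \<in> carrier_b Abar" and xn: "xn \<in> carrier_b N" and xh: "xh \<in> carrier_b H"
        using x unfolding xx A_def Bbar_def by auto
      have "\<forall>i. \<exists>n::nat. i < v \<longrightarrow> xa i = ga i [^]\<^bsub>mult_group (As i)\<^esub> n"
        using ga xa unfolding Abar_def by (auto simp: PiE_iff)
      from choice[OF this] obtain ka :: "nat \<Rightarrow> nat" where ka': "\<forall>i. i < v \<longrightarrow> xa i = ga i [^]\<^bsub>mult_group (As i)\<^esub> ka i" by blast
      then have ka: "\<And>i. i < v \<Longrightarrow> xa i = ga i [^]\<^bsub>mult_group (As i)\<^esub> ka i" by blast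
      have "\<forall>j. \<exists>n::nat. j < m \<longrightarrow> xh j = gb j [^]\<^bsub>mult_group (Bs j)\<^esub> n"
        using gb xh unfolding H_def by (auto simp: PiE_iff)
      from choice[OF this] obtain kb :: "nat \<Rightarrow> nat" where kb': "\<forall>j. j < m \<longrightarrow> xh j = gb j [^]\<^bsub>mult_group (Bs j)\<^esub> kb j" by blast
      then have kb: "\<And>j. j < m \<Longrightarrow> xh j = gb j [^]\<^bsub>mult_group (Bs j)\<^esub> kb j" by blast
      define u where "u t = (if t < v then ka t else kb (t - v))" for t
      obtain k where k: "\<forall>t\<in>{..<v + m}. k mod md t = u t mod md t"
        using crt_fin[of "{..<v + m}" md u] md_cop md0 by blast
      have pa: "ga i [^]\<^bsub>mult_group (As i)\<^esub> k = xa i" if i: "i < v" for i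
      proof -
        have "ga i [^]\<^bsub>mult_group (As i)\<^esub> k = ga i [^]\<^bsub>mult_group (As i)\<^esub> (k mod md i)"
          using pow_mod_nat[OF GAa(2)[OF i], of "ga i" "md i" k] ga[OF i] ordga[OF i] i by (simp add: md_def)
        also have "\<dots> = ga i [^]\<^bsub>mult_group (As i)\<^esub> (ka i mod md i)" using k i by (simp add: u_def)
        also have "\<dots> = ga i [^]\<^bsub>mult_group (As i)\<^esub> ka i"
          using pow_mod_nat[OF GAa(2)[OF i], of "ga i" "md i" "ka i"] ga[OF i] ordga[OF i] i by (simp add: md_def)
        finally show ?thesis using ka[OF i] by simp
      qed
      have pb: "gb j [^]\<^bsub>mult_group (Bs j)\<^esub> k = xh j" if j: "j < m" for j
      proof -
        have jr: "j < r" using j \<open>m \<le> r\<close> by simp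
        have t: "v + j \<in> {..<v + m}" "\<not> v + j < v" using j by auto
        have "gb j [^]\<^bsub>mult_group (Bs j)\<^esub> k = gb j [^]\<^bsub>mult_group (Bs j)\<^esub> (k mod md (v + j))"
          using pow_mod_nat[OF GAb(2)[OF jr], of "gb j" "md (v + j)" k] gb[OF j] ordgb[OF j] by (simp add: md_def)
        also have "\<dots> = gb j [^]\<^bsub>mult_group (Bs j)\<^esub> (kb j mod md (v + j))" using k t by (simp add: u_def)
        also have "\<dots> = gb j [^]\<^bsub>mult_group (Bs j)\<^esub> kb j"
          using pow_mod_nat[OF GAb(2)[OF jr], of "gb j" "md (v + j)" "kb j"] gb[OF j] ordgb[OF j] by (simp add: md_def)
        finally show ?thesis using kb[OF j] by simp
      qed
      have gAk: "gA [^]\<^bsub>mult_group Abar\<^esub> k = xa"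
      proof -
        have "gA [^]\<^bsub>mult_group Abar\<^esub> k = (\<lambda>i\<in>{..<v}. gA i [^]\<^bsub>mult_group (As i)\<^esub> k)"
          unfolding Abar_def by (rule pow_prod) (use gAc Abar_def in simp)
        also have "\<dots> = xa" using pa xa unfolding gA_def Abar_def
          by (auto simp: PiE_iff extensional_def intro!: ext)
        finally show ?thesis .
      qed
      have gHk: "gH [^]\<^bsub>mult_group H\<^esub> k = xh"
      proof -
        have "gH [^]\<^bsub>mult_group H\<^esub> k = (\<lambda>j\<in>{..<m}. gH j [^]\<^bsub>mult_group (Bs j)\<^esub> k)"
          unfolding H_def by (rule pow_prod) (use gHc H_def in simp)
        also have "\<dots> = xh" using pb xh unfolding gH_def H_def
          by (auto simp: PiE_iff extensional_def intro!: ext)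
        finally show ?thesis .
      qed
      have gk: "g [^]\<^bsub>mult_group A\<^esub> k = (xa, (zero_b N, xh))"
        unfolding g_def A_def pow_pair using powsemi[OF gHc] gAk gHk by (simp add: A_def)
      define s where "s = (zero_b Abar, (xn, zero_b H))"
      have sS: "s \<in> soc A"
      proof -
        have "zero_b Abar \<in> soc Abar" by (rule zero_soc[OF GAbar])
        moreover have "zero_b H \<in> (\<Pi>\<^sub>E j\<in>{..<m}. I j)"
        proof -
          have "zero_b (Bs j) \<in> soc (Bs j)" if "j < m" for j
            using zero_soc[OF GAb(1) GAb(2)] that \<open>m \<le> r\<close> by simp
          moreover have "emb {..<m} Bs j (zero_b (Bs j)) = zero_b H" for j
            unfolding emb_def H_def by (auto intro!: restrict_ext)
          ultimately show ?thesis using K0 unfolding I_def K_def H_def by auto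
        qed
        ultimately show ?thesis unfolding part1 s_def using xn by simp
      qed
      have "s \<otimes>\<^bsub>mult_group A\<^esub> g [^]\<^bsub>mult_group A\<^esub> k = x"
        unfolding gk s_def xx using MAbar.l_one[of xa] xa act0[OF zH] MN.r_one[of xn] xn MH.l_one[of xh] xh
        by (simp add: A_def Bbar_def)
      then show ?thesis using sS by blast
    qed
    show ?thesis by (rule quot_cyclic[OF GA nrm gc rep])
  qed
  show ?thesis using part1 part2 by blast
qed

end
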